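(* Let $X$ be a G-space and suppose there exists a hypercyclic operator $T_0\in L(X)$. Then every $A\in\Sigma(X)$ is an orbit, i.e. there exist $T\in L(X)$ and $x\in X$ with $A=O(T,x)=\{T^nx:n\in\mathbb{Z}_+\}$.
   Context: All topological vector spaces are Hausdorff, over $\mathbb{K}\in\{\mathbb{R},\mathbb{C}\}$. For a topological vector space $X$, $L(X)$ is the algebra of continuous linear operators on $X$ and $GL(X)$ is the group of invertible $T\in L(X)$ with $T^{-1}\in L(X)$. "Countable" means infinite countable. $\Sigma(X)$ denotes the set of all countable dense linearly independent subsets of $X$. $T\in L(X)$ is hypercyclic if there is $x\in X$ (a hypercyclic vector) whose orbit $O(T,x)=\{T^nx:n\in\mathbb{Z}_+\}$ is dense in $X$. A locally convex space $X$ is a G-space if $\Sigma(X)\neq\varnothing$ and $GL(X)$ acts transitively on $\Sigma(X)$ (i.e. for all $A,B\in\Sigma(X)$ there is $J\in GL(X)$ with $J(A)=B$). A subset $A\subseteq X$ is called an orbit if $A=O(T,x)$ for some $T\in L(X)$, $x\in X$. *)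

theory Defs
  imports "HOL-Analysis.Analysis"
begin

definition tvs :: "('k::real_normed_field \<Rightarrow> 'a::{ab_group_add,t2_space} \<Rightarrow> 'a) \<Rightarrow> bool" where
  "tvs smult_op \<longleftrightarrow> vector_space smult_op
     \<and> continuous_on UNIV (\<lambda>p::'a \<times> 'a. fst p + snd p)
     \<and> continuous_on UNIV (\<lambda>p::'k \<times> 'a. smult_op (fst p) (snd p))"

definition convex_set :: "('k::real_normed_field \<Rightarrow> 'a::ab_group_add \<Rightarrow> 'a) \<Rightarrow> 'a set \<Rightarrow> bool" where
  "convex_set smult_op V \<longleftrightarrow> (\<forall>x\<in>V. \<forall>y\<in>V. \<forall>t::real. 0 \<le> t \<and> t \<le> 1 \<longrightarrow>
      smult_op (of_real t) x + smult_op (of_real (1 - t)) y \<in> V)"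

definition locally_convex :: "('k::real_normed_field \<Rightarrow> 'a::{ab_group_add,t2_space} \<Rightarrow> 'a) \<Rightarrow> bool" where
  "locally_convex smult_op \<longleftrightarrow> tvs smult_op \<and>
     (\<forall>U. open U \<and> 0 \<in> U \<longrightarrow> (\<exists>V. open V \<and> 0 \<in> V \<and> V \<subseteq> U \<and> convex_set smult_op V))"

definition cont_ops :: "('k::real_normed_field \<Rightarrow> 'a::{ab_group_add,t2_space} \<Rightarrow> 'a) \<Rightarrow> ('a \<Rightarrow> 'a) set" where
  "cont_ops smult_op = {T. Vector_Spaces.linear smult_op smult_op T \<and> continuous_on UNIV T}"

definition inv_ops :: "('k::real_normed_field \<Rightarrow> 'a::{ab_group_add,t2_space} \<Rightarrow> 'a) \<Rightarrow> ('a \<Rightarrow> 'a) set" where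
  "inv_ops smult_op = {T. T \<in> cont_ops smult_op \<and> bij T \<and> inv T \<in> cont_ops smult_op}"

definition Sigma_set :: "('k::real_normed_field \<Rightarrow> 'a::{ab_group_add,t2_space} \<Rightarrow> 'a) \<Rightarrow> 'a set set" where
  "Sigma_set smult_op = {A. countable A \<and> infinite A \<and> closure A = UNIV \<and> \<not> module.dependent smult_op A}"

definition G_space :: "('k::real_normed_field \<Rightarrow> 'a::{ab_group_add,t2_space} \<Rightarrow> 'a) \<Rightarrow> bool" where
  "G_space smult_op \<longleftrightarrow> locally_convex smult_op \<and> Sigma_set smult_op \<noteq> {} \<and>
     (\<forall>A\<in>Sigma_set smult_op. \<forall>B\<in>Sigma_set smult_op. \<exists>J\<in>inv_ops smult_op. J ` A = B)"

definition orbit :: "('a \<Rightarrow> 'a) \<Rightarrow> 'a \<Rightarrow> 'a set" where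
  "orbit T x = range (\<lambda>n::nat. (T ^^ n) x)"

definition hypercyclic :: "('a::topological_space \<Rightarrow> 'a) \<Rightarrow> bool" where
  "hypercyclic T \<longleftrightarrow> (\<exists>x. closure (orbit T x) = UNIV)"

end

theory Submission
  imports Defs "HOL-Computational_Algebra.Fundamental_Theorem_Algebra"
begin


lemma map_poly_of_real_mult:
  "map_poly (of_real :: real \<Rightarrow> 'k::{real_algebra_1,comm_ring_1}) (p*q) = map_poly of_real p * map_poly of_real q"
  by (intro poly_eqI) (simp add: coeff_map_poly coeff_mult of_real_sum)

lemma map_poly_of_real_prod:
  "map_poly (of_real :: real \<Rightarrow> 'k::{real_algebra_1,comm_ring_1}) (\<Prod>i\<in>A. p i) = (\<Prod>i\<in>A. map_poly of_real (p i))"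
  by (induction A rule: infinite_finite_induct) (auto simp: map_poly_of_real_mult)

lemma map_poly_of_real_power:
  "map_poly (of_real :: real \<Rightarrow> 'k::{real_algebra_1,comm_ring_1}) (p^n) = (map_poly of_real p)^n"
  by (induction n) (auto simp: map_poly_of_real_mult)

lemma map_poly_of_real_diff:
  "map_poly (of_real :: real \<Rightarrow> 'k::{real_algebra_1,comm_ring_1}) (p - q) = map_poly of_real p - map_poly of_real q"
  by (intro poly_eqI) (simp add: coeff_map_poly)

lemma map_poly_of_real_add:
  "map_poly (of_real :: real \<Rightarrow> 'k::{real_algebra_1,comm_ring_1}) (p + q) = map_poly of_real p + map_poly of_real q"
  by (intro poly_eqI) (simp add: coeff_map_poly)

lemma map_poly_of_real_inj:
  "map_poly (of_real :: real \<Rightarrow> 'k::{real_algebra_1,comm_ring_1}) p = map_poly of_real q \<Longrightarrow> p = q"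
  by (intro poly_eqI) (metis coeff_map_poly of_real_0 of_real_eq_iff)

lemma poly_quad_of_real: "poly (map_poly (of_real :: real \<Rightarrow> 'k::{real_algebra_1,comm_ring_1}) [:a,b,c:]) x = of_real a + x * (of_real b + x * of_real c)"
  by (simp add: map_poly_pCons)

lemma key_factor:
  fixes \<xi> :: "'k::real_normed_field" and G :: "real poly"
  assumes lc: "lead_coeff G = 1"
  shows "\<exists>r::nat\<Rightarrow>complex. poly (map_poly of_real G) = (\<lambda>z. \<Prod>i<degree G. z - r i) \<and>
     (poly (map_poly of_real G) \<xi>)^2 = (\<Prod>i<degree G. \<xi>*\<xi> - of_real (2*Re (r i)) * \<xi> + of_real ((cmod (r i))^2))"
proof -
  define Gc where "Gc = (map_poly of_real G :: complex poly)"
  have dG: "degree Gc = degree G" unfolding Gc_def by (rule degree_map_poly) auto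
  have lGc: "lead_coeff Gc = 1" using lc dG unfolding Gc_def by (simp add: coeff_map_poly)
  obtain r where r: "smult (lead_coeff Gc) (\<Prod>i<degree Gc. [:-r i, 1:]) = Gc"
    using complex_poly_decompose' by blast
  have r': "Gc = (\<Prod>i<degree G. [:-r i, 1:])" using r lGc dG by simp
  have pGc: "poly Gc z = (\<Prod>i<degree G. z - r i)" for z
    by (simp add: r' poly_prod)
  define qr where "qr i = [:(cmod (r i))^2, -2*Re(r i), 1:]" for i
  have qz: "poly (map_poly of_real (qr i)) z = (z - r i) * (z - cnj (r i))" for i z
  proof -
    have "(z - r i) * (z - cnj (r i)) = z*z - (r i + cnj (r i)) * z + r i * cnj (r i)"
      by (simp add: algebra_simps)
    also have "\<dots> = z*z - of_real (2 * Re (r i)) * z + of_real ((cmod (r i))^2)"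
      by (simp add: complex_add_cnj complex_mult_cnj cmod_power2 flip: of_real_power of_real_add)
    finally show ?thesis unfolding qr_def poly_quad_of_real by (simp add: algebra_simps)
  qed
  have realc: "\<And>n. poly.coeff Gc n \<in> \<real>" unfolding Gc_def by (simp add: coeff_map_poly)
  have cnjprod: "(\<Prod>i<degree G. z - cnj (r i)) = poly Gc z" for z
  proof -
    have "(\<Prod>i<degree G. z - cnj (r i)) = cnj (\<Prod>i<degree G. cnj z - r i)"
      by (simp add: cnj_prod)
    also have "\<dots> = cnj (poly Gc (cnj z))" by (simp add: pGc)
    also have "\<dots> = poly Gc z" using poly_cnj_real[OF realc, of "cnj z"] by simp
    finally show ?thesis .
  qed
  have GG: "G * G = (\<Prod>i<degree G. qr i)"
  proof (rule map_poly_of_real_inj[where 'k=complex])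
    show "map_poly (of_real :: real \<Rightarrow> complex) (G * G) = map_poly of_real (\<Prod>i<degree G. qr i)"
    proof (rule poly_eq_poly_eq_iff[THEN iffD1], rule ext)
      fix z
      have "poly (map_poly (of_real :: real \<Rightarrow> complex) (\<Prod>i<degree G. qr i)) z
           = (\<Prod>i<degree G. (z - r i) * (z - cnj (r i)))"
        by (simp add: map_poly_of_real_prod poly_prod qz)
      also have "\<dots> = poly Gc z * poly Gc z"
        by (simp add: prod.distrib pGc cnjprod)
      finally show "poly (map_poly (of_real :: real \<Rightarrow> complex) (G * G)) z =
            poly (map_poly of_real (\<Prod>i<degree G. qr i)) z"
        by (simp add: map_poly_of_real_mult Gc_def)
    qed
  qed
  have "(poly (map_poly of_real G) \<xi>)^2 = poly (map_poly of_real (G*G)) \<xi>"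
    by (simp add: map_poly_of_real_mult power2_eq_square)
  also have "\<dots> = (\<Prod>i<degree G. poly (map_poly of_real (qr i)) \<xi>)"
    by (simp add: GG map_poly_of_real_prod poly_prod)
  also have "\<dots> = (\<Prod>i<degree G. \<xi>*\<xi> - of_real (2*Re (r i)) * \<xi> + of_real ((cmod (r i))^2))"
    by (intro prod.cong refl) (simp add: qr_def poly_quad_of_real algebra_simps)
  finally show ?thesis using pGc unfolding Gc_def by blast
qed

lemma mazur:
  fixes \<xi> :: "'k::real_normed_field"
  shows "\<exists>w::complex. \<xi>*\<xi> - of_real (2*Re w) * \<xi> + of_real ((cmod w)^2) = 0"
proof (rule ccontr)
  assume nz: "\<not> ?thesis"
  define Q where "Q w = \<xi>*\<xi> - of_real (2*Re w) * \<xi> + of_real ((cmod w)^2)" for w :: complex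
  define f where "f w = norm (Q w)" for w
  have fcont: "continuous_on UNIV f" unfolding f_def Q_def by (intro continuous_intros)
  have fpos: "f w > 0" for w using nz unfolding Q_def f_def by auto
  have coer: "f w \<ge> (cmod w)^2 - 2 * cmod w * norm \<xi> - (norm \<xi>)^2" for w
  proof -
    have e: "of_real ((cmod w)^2) = Q w - \<xi>*\<xi> + of_real (2*Re w) * \<xi>" by (simp add: Q_def)
    have "(cmod w)^2 = norm (of_real ((cmod w)^2) :: 'k)" by (simp only: norm_of_real abs_power2)
    also have "\<dots> \<le> norm (Q w) + norm (\<xi>*\<xi>) + norm (of_real (2*Re w) * \<xi>)"
      unfolding e by (rule order_trans[OF norm_triangle_ineq]) (intro add_right_mono norm_triangle_ineq4)
    also have "norm (of_real (2*Re w) * \<xi>) \<le> 2 * cmod w * norm \<xi>"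
      by (simp add: norm_mult abs_Re_le_cmod mult_right_mono)
    finally show ?thesis by (simp add: f_def norm_mult power2_eq_square)
  qed
  define R where "R = 3 * norm \<xi> + 1"
  have bnd: "cmod w \<le> R" if "f w \<le> f 0" for w
  proof (rule ccontr)
    assume "\<not> cmod w \<le> R"
    hence c: "cmod w > 3 * norm \<xi> + 1" by (simp add: R_def)
    have f0: "f 0 = (norm \<xi>)^2" by (simp add: f_def Q_def norm_mult power2_eq_square)
    have "cmod w * (cmod w - 2 * norm \<xi>) \<ge> (3 * norm \<xi> + 1) * (norm \<xi> + 1)"
      using c by (intro mult_mono) auto
    hence "(cmod w)^2 - 2 * cmod w * norm \<xi> - (norm \<xi>)^2 > (norm \<xi>)^2"
      apply (simp add: power2_eq_square algebra_simps)
      using mult_nonneg_nonneg[OF norm_ge_zero norm_ge_zero, of \<xi> \<xi>] norm_ge_zero[of \<xi>] by linarith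
    with coer[of w] that f0 show False by simp
  qed
  define K0 where "K0 = {w. f w \<le> f 0}"
  have cK0: "compact K0"
  proof (subst compact_eq_bounded_closed, intro conjI)
    show "bounded K0" unfolding bounded_iff K0_def using bnd by auto
    show "closed K0" unfolding K0_def
      by (rule closed_Collect_le[OF fcont]) auto
  qed
  obtain wm where wm: "wm \<in> K0" "\<And>w. w \<in> K0 \<Longrightarrow> f wm \<le> f w"
    using continuous_attains_inf[OF cK0 _ continuous_on_subset[OF fcont]] K0_def by force
  define m where "m = f wm"
  have mle: "m \<le> f w" for w
    using wm unfolding m_def K0_def by (cases "f w \<le> f 0") force+
  have mpos: "m > 0" using fpos m_def by auto
  define S where "S = {w. f w = m}"
  have cS: "compact S"
  proof -
    have "closed S" unfolding S_def by (rule closed_Collect_eq[OF fcont]) auto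
    moreover have "S \<subseteq> K0" unfolding S_def K0_def using mle[of 0] by auto
    ultimately show ?thesis using cK0 compact_Int_closed[of K0 S] by (simp add: Int_absorb1)
  qed
  have "wm \<in> S" unfolding S_def m_def by simp
  then obtain w0 where w0: "w0 \<in> S" "\<And>w. w \<in> S \<Longrightarrow> cmod w \<le> cmod w0"
    using continuous_attains_sup[OF cS _ continuous_on_norm_id[of S]] by auto
  define \<epsilon> where "\<epsilon> = m/2"
  have epos: "\<epsilon> > 0" using mpos by (simp add: \<epsilon>_def)
  define z1 where "z1 = Complex (Re w0) (sqrt ((Im w0)^2 + \<epsilon>))"
  have Rez1: "Re z1 = Re w0" by (simp add: z1_def)
  have cz1: "(cmod z1)^2 = (cmod w0)^2 + \<epsilon>"
    using epos by (simp add: z1_def cmod_power2)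
  have Qz1: "Q z1 = Q w0 + of_real \<epsilon>" by (simp add: Q_def Rez1 cz1)
  have fz1: "f z1 > m"
  proof -
    have "cmod z1 > cmod w0"
      apply (rule power_less_imp_less_base[of _ 2]) using cz1 epos by simp_all
    hence "z1 \<notin> S" using w0(2)[of z1] by linarith
    thus ?thesis using mle[of z1] unfolding S_def by (simp add: less_le)
  qed
  have fw0: "f w0 = m" using w0 S_def by auto
  define h where "h = [:(cmod w0)^2, -2*Re w0, 1:]"
  have bound: "f z1 \<le> m * (1 + (1/2)^n)^2" if n1: "n \<ge> 1" for n
  proof -
    define G where "G = h^n + [: - ((-\<epsilon>)^n) :]"
    have dh: "degree h = 2" "lead_coeff h = 1" by (simp_all add: h_def)
    have hnz: "h \<noteq> 0" using dh by auto
    have dhn: "degree (h^n) = 2*n" "lead_coeff (h^n) = 1"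
      using dh hnz by (simp add: degree_power_eq) (metis lead_coeff_power dh(2) power_one)
    have dG: "degree G = 2*n" unfolding G_def using dhn n1
      by (subst degree_add_eq_left) auto
    have lG: "lead_coeff G = 1" unfolding dG using dhn n1
      by (simp add: G_def coeff_pCons split: nat.splits)
    obtain r where r: "poly (map_poly of_real G) = (\<lambda>z. \<Prod>i<degree G. z - r i)"
      and rr: "(poly (map_poly of_real G) \<xi>)^2 = (\<Prod>i<degree G. \<xi>*\<xi> - of_real (2*Re (r i)) * \<xi> + of_real ((cmod (r i))^2))"
      using key_factor[OF lG, of \<xi>] by blast
    have phz1: "poly (map_poly (of_real :: real \<Rightarrow> complex) h) z1 = - of_real \<epsilon>"
      using epos cmod_power2[of w0] by (simp add: h_def poly_quad_of_real z1_def complex_eq_iff cmod_power2 power2_eq_square algebra_simps)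
    have Gz1: "poly (map_poly (of_real :: real \<Rightarrow> complex) G) z1 = 0"
      unfolding G_def using phz1
      by (simp add: map_poly_of_real_power map_poly_pCons map_poly_of_real_add)
    then obtain j where j: "j < 2*n" "r j = z1" using r dG by auto
    have Ph: "poly (map_poly of_real h) \<xi> = Q w0"
      by (simp add: h_def poly_quad_of_real Q_def algebra_simps)
    have PG: "poly (map_poly of_real G) \<xi> = (Q w0)^n - of_real ((-\<epsilon>)^n)"
      unfolding G_def by (simp add: map_poly_of_real_power map_poly_pCons map_poly_of_real_add Ph)
    have nG: "norm (poly (map_poly of_real G) \<xi>) \<le> m^n + \<epsilon>^n"
    proof -
      have "norm (poly (map_poly of_real G) \<xi>) \<le> norm ((Q w0)^n) + norm (of_real ((-\<epsilon>)^n) :: 'k)"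
        unfolding PG by (rule norm_triangle_ineq4)
      also have "\<dots> = m^n + \<epsilon>^n" using epos fw0
        by (simp add: norm_power f_def power_abs)
      finally show ?thesis .
    qed
    define P where "P = (\<Prod>i<2*n. f (r i))"
    have PP: "(norm (poly (map_poly of_real G) \<xi>))^2 = P"
      unfolding P_def f_def Q_def using rr dG by (simp add: norm_power[symmetric] prod_norm)
    have Plow: "P \<ge> f z1 * m^(2*n-1)"
    proof -
      have "P = f (r j) * (\<Prod>i\<in>{..<2*n}-{j}. f (r i))"
        unfolding P_def using j by (simp add: prod.remove)
      moreover have "(\<Prod>i\<in>{..<2*n}-{j}. f (r i)) \<ge> (\<Prod>i\<in>{..<2*n}-{j}. m)"
        by (rule prod_mono) (use mpos mle in auto)
      moreover have "(\<Prod>i\<in>{..<2*n}-{j}. m) = m^(2*n-1)" using j by simp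
      ultimately show ?thesis using j fz1 mpos
        by (metis mult_left_mono order_less_imp_le zero_le_power order_trans)
    qed
    have "f z1 * m^(2*n-1) \<le> (m^n + \<epsilon>^n)^2"
      using Plow PP nG by (metis norm_ge_zero order_trans power_mono)
    hence E1: "m * (f z1 * m^(2*n-1)) \<le> m * (m^n + \<epsilon>^n)^2"
      using mpos by (simp add: mult_left_mono)
    have E2: "m * (f z1 * m^(2*n-1)) = f z1 * m^(2*n)"
      using n1 by (cases n) (auto simp: algebra_simps)
    have E3: "m * (m^n + \<epsilon>^n)^2 = (m * (1 + (1/2)^n)^2) * m^(2*n)"
      by (simp add: \<epsilon>_def power_divide power2_eq_square algebra_simps power_add flip: power_add mult_2)
    have "f z1 * m^(2*n) \<le> (m * (1 + (1/2)^n)^2) * m^(2*n)" using E1 unfolding E2 E3 .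
    thus ?thesis using mpos by simp
  qed
  define c where "c = (f z1 - m) / m"
  have cpos: "c > 0" using fz1 mpos by (simp add: c_def)
  obtain k where k: "(1/2::real)^k < min 1 (c/3)"
    using real_arch_pow_inv[of "min 1 (c/3)" "1/2"] cpos by auto
  define d where "d = (1/2::real)^(Suc k)"
  have d: "d \<le> 1" "d < c/3" "d \<ge> 0" using k cpos by (auto simp: d_def)
  have "f z1 \<le> m * (1 + d)^2" using bound[of "Suc k"] by (simp add: d_def)
  also have "\<dots> \<le> m * (1 + 3*d)" using d mpos
    by (intro mult_left_mono) (auto simp: power2_eq_square algebra_simps intro: mult_left_le_one_le)
  also have "\<dots> < m * (1 + c)" using d mpos by simp
  also have "\<dots> = f z1" using mpos by (simp add: c_def field_simps)
  finally show False by simp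
qed



lemma closed_sub_compact: "compact S \<Longrightarrow> closed T \<Longrightarrow> T \<subseteq> S \<Longrightarrow> compact T"
  by (metis compact_Int_closed inf.absorb2)

lemma K_compact_cball: "compact (cball (0::'k::real_normed_field) M)"
proof -
  have quad: "\<exists>a b::real. (\<eta> - of_real a)*(\<eta> - of_real a) = - of_real (b*b)" for \<eta> :: 'k
  proof -
    obtain w where w: "\<eta>*\<eta> - of_real (2*Re w) * \<eta> + of_real ((cmod w)^2) = 0" using mazur by blast
    have c2: "(cmod w)^2 = Re w * Re w + Im w * Im w" using cmod_power2[of w] by (simp only: power2_eq_square)
    have "(\<eta> - of_real (Re w))*(\<eta> - of_real (Re w)) = \<eta>*\<eta> - of_real (2*Re w) * \<eta> + of_real ((cmod w)^2) - of_real (Im w * Im w)"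
      unfolding c2 by (simp add: algebra_simps)
    thus ?thesis using w by auto
  qed
  show ?thesis
  proof (cases "\<forall>\<eta>::'k. \<eta> \<in> range of_real")
    case True
    have "cball (0::'k) M \<subseteq> of_real ` cball (0::real) M"
    proof
      fix x :: 'k assume "x \<in> cball 0 M"
      moreover obtain a where "x = of_real a" using True by blast
      ultimately show "x \<in> of_real ` cball (0::real) M" by auto
    qed
    moreover have "compact (of_real ` cball (0::real) M :: 'k set)"
      by (rule compact_continuous_image) (auto intro!: continuous_intros)
    ultimately show ?thesis by (meson closed_sub_compact closed_cball)
  next
    case False
    then obtain \<eta>0 :: 'k where e0: "\<eta>0 \<notin> range of_real" by blast
    obtain a0 b0 where ab0: "(\<eta>0 - of_real a0)*(\<eta>0 - of_real a0) = - of_real (b0*b0)" using quad by blast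
    have b0: "b0 \<noteq> 0"
    proof
      assume "b0 = 0"
      hence "\<eta>0 - of_real a0 = 0" using ab0 by simp
      hence "\<eta>0 = of_real a0" by simp
      thus False using e0 by auto
    qed
    define i where "i = (\<eta>0 - of_real a0) / of_real b0"
    have ii: "i * i = -1"
    proof -
      have "i * i = ((\<eta>0 - of_real a0)*(\<eta>0 - of_real a0)) / (of_real (b0*b0))"
        by (simp add: i_def)
      also have "\<dots> = -1" using b0 unfolding ab0 by simp
      finally show ?thesis .
    qed
    have ni: "norm i = 1"
    proof -
      have "norm (i*i) = 1" using ii by simp
      hence "(norm i)^2 = 1^2" by (simp add: norm_mult power2_eq_square)
      thus ?thesis by (rule power2_eq_imp_eq) auto
    qed
    have rep: "\<exists>a b. \<eta> = of_real a + of_real b * i" for \<eta> :: 'k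
    proof -
      obtain a b where ab: "(\<eta> - of_real a)*(\<eta> - of_real a) = - of_real (b*b)" using quad by blast
      show ?thesis
      proof (cases "b = 0")
        case True
        hence "\<eta> = of_real a + of_real 0 * i" using ab by simp
        thus ?thesis by blast
      next
        case False
        define j where "j = (\<eta> - of_real a) / of_real b"
        have jj: "j * j = -1"
        proof -
          have "j * j = ((\<eta> - of_real a)*(\<eta> - of_real a)) / (of_real (b*b))"
            by (simp add: j_def)
          also have "\<dots> = -1" using False unfolding ab by simp
          finally show ?thesis .
        qed
        have "(j - i) * (j + i) = 0" using jj ii by (simp add: algebra_simps)
        hence "j = i \<or> j = -i" by (auto simp: eq_neg_iff_add_eq_0)
        moreover have "\<eta> = of_real a + of_real b * j" using False by (simp add: j_def)
        ultimately have "\<eta> = of_real a + of_real b * i \<or> \<eta> = of_real a + of_real (-b) * i" by auto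
        thus ?thesis by blast
      qed
    qed
    have nb: "\<bar>a\<bar> + \<bar>b\<bar> \<le> 2 * norm (of_real a + of_real b * i :: 'k)" for a b :: real
    proof (cases "\<bar>a\<bar> + \<bar>b\<bar> = 0")
      case True
      hence "a = 0 \<and> b = 0" by (metis abs_ge_zero abs_eq_0 add_nonneg_eq_0_iff)
      thus ?thesis by simp
    next
      case False
      hence pos: "\<bar>a\<bar> + \<bar>b\<bar> > 0" by simp
      have "(of_real a + of_real b * i) * (of_real a - of_real b * i) = of_real a * of_real a - of_real b * of_real b * (i*i :: 'k)"
        by (simp add: algebra_simps)
      also have "\<dots> = of_real (a*a + b*b)" using ii by simp
      finally have pr: "(of_real a + of_real b * i) * (of_real a - of_real b * i) = (of_real (a*a + b*b) :: 'k)" .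
      have "norm (of_real a + of_real b * i :: 'k) * norm (of_real a - of_real b * i :: 'k) = norm (of_real (a*a + b*b) :: 'k)"
        unfolding pr[symmetric] by (rule norm_mult[symmetric])
      hence "norm (of_real a + of_real b * i :: 'k) * norm (of_real a - of_real b * i :: 'k) = \<bar>a*a + b*b\<bar>"
        by (simp only: norm_of_real)
      moreover have "\<bar>a*a + b*b\<bar> = a*a + b*b" by (intro abs_of_nonneg add_nonneg_nonneg) auto
      ultimately have "norm (of_real a + of_real b * i :: 'k) * norm (of_real a - of_real b * i :: 'k) = a*a + b*b"
        by simp
      moreover have "norm (of_real a - of_real b * i :: 'k) \<le> \<bar>a\<bar> + \<bar>b\<bar>"
        using norm_triangle_ineq4[of "of_real a :: 'k" "of_real b * i"] by (simp add: norm_mult ni)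
      ultimately have "a*a + b*b \<le> norm (of_real a + of_real b * i :: 'k) * (\<bar>a\<bar> + \<bar>b\<bar>)"
        by (metis mult.commute mult_right_mono norm_ge_zero)
      moreover have "(\<bar>a\<bar> + \<bar>b\<bar>) * (\<bar>a\<bar> + \<bar>b\<bar>) \<le> 2 * (a*a + b*b)"
      proof -
        have "0 \<le> (\<bar>a\<bar> - \<bar>b\<bar>) * (\<bar>a\<bar> - \<bar>b\<bar>)" by simp
        moreover have "(\<bar>a\<bar> + \<bar>b\<bar>) * (\<bar>a\<bar> + \<bar>b\<bar>) = 2 * (a*a + b*b) - (\<bar>a\<bar> - \<bar>b\<bar>) * (\<bar>a\<bar> - \<bar>b\<bar>)"
          by (simp add: algebra_simps abs_mult_self_eq)
        ultimately show ?thesis by linarith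
      qed
      ultimately have "(\<bar>a\<bar> + \<bar>b\<bar>) * (\<bar>a\<bar> + \<bar>b\<bar>) \<le> (2 * norm (of_real a + of_real b * i :: 'k)) * (\<bar>a\<bar> + \<bar>b\<bar>)"
        by (simp add: algebra_simps)
      thus ?thesis using pos by simp
    qed
    define g where "g = (\<lambda>p::real\<times>real. of_real (fst p) + of_real (snd p) * i :: 'k)"
    have "cball (0::'k) M \<subseteq> g ` (cball 0 (2*M) \<times> cball 0 (2*M))"
    proof
      fix x :: 'k assume x: "x \<in> cball 0 M"
      obtain a b where xab: "x = of_real a + of_real b * i" using rep by blast
      have "\<bar>a\<bar> + \<bar>b\<bar> \<le> 2*M" using nb[of a b] x xab by auto
      hence "(a,b) \<in> cball 0 (2*M) \<times> cball 0 (2*M)" by auto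
      thus "x \<in> g ` (cball 0 (2*M) \<times> cball 0 (2*M))" using xab g_def by force
    qed
    moreover have "compact (g ` (cball 0 (2*M) \<times> cball 0 (2*M)))"
      unfolding g_def by (rule compact_continuous_image) (auto intro!: continuous_intros compact_Times)
    ultimately show ?thesis by (meson closed_sub_compact closed_cball)
  qed
qed



lemma tvs_vs: "tvs s \<Longrightarrow> vector_space s" by (simp add: tvs_def)

lemma tvs_tendsto_scale:
  fixes s :: "'k::real_normed_field \<Rightarrow> 'a::{ab_group_add,t2_space} \<Rightarrow> 'a"
    and f :: "'b \<Rightarrow> 'k" and g :: "'b \<Rightarrow> 'a"
  assumes "tvs s" "(f \<longlongrightarrow> a) F" "(g \<longlongrightarrow> b) F"
  shows "((\<lambda>x. s (f x) (g x)) \<longlongrightarrow> s a b) F"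
proof -
  have c: "continuous_on UNIV (\<lambda>p::'k \<times> 'a. s (fst p) (snd p))" using assms(1) by (simp add: tvs_def)
  have "isCont (\<lambda>p::'k \<times> 'a. s (fst p) (snd p)) (a, b)"
    using c by (simp add: continuous_on_eq_continuous_at)
  from isCont_tendsto_compose[OF this tendsto_Pair[OF assms(2,3)]] show ?thesis by simp
qed

lemma tvs_tendsto_add:
  fixes s :: "'k::real_normed_field \<Rightarrow> 'a::{ab_group_add,t2_space} \<Rightarrow> 'a"
    and f g :: "'b \<Rightarrow> 'a"
  assumes "tvs s" "(f \<longlongrightarrow> a) F" "(g \<longlongrightarrow> b) F"
  shows "((\<lambda>x. f x + g x) \<longlongrightarrow> a + b) F"
proof -
  have c: "continuous_on UNIV (\<lambda>p::'a \<times> 'a. fst p + snd p)" using assms(1) by (simp add: tvs_def)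
  have "isCont (\<lambda>p::'a \<times> 'a. fst p + snd p) (a, b)"
    using c by (simp add: continuous_on_eq_continuous_at)
  from isCont_tendsto_compose[OF this tendsto_Pair[OF assms(2,3)]] show ?thesis by simp
qed

lemma tvs_tendsto_diff:
  fixes s :: "'k::real_normed_field \<Rightarrow> 'a::{ab_group_add,t2_space} \<Rightarrow> 'a"
    and f g :: "'b \<Rightarrow> 'a"
  assumes "tvs s" "(f \<longlongrightarrow> a) F" "(g \<longlongrightarrow> b) F"
  shows "((\<lambda>x. f x - g x) \<longlongrightarrow> a - b) F"
proof -
  interpret vs: vector_space s using tvs_vs[OF assms(1)] .
  have e: "u - v = u + s (-1) v" for u v by (simp add: vs.scale_minus_left)
  have "((\<lambda>x. f x + s (-1) (g x)) \<longlongrightarrow> a + s (-1) b) F"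
    by (intro tvs_tendsto_add[OF assms(1)] tvs_tendsto_scale[OF assms(1)] assms(2,3) tendsto_const)
  thus ?thesis unfolding e .
qed

lemma closed_insert_line:
  fixes s :: "'k::real_normed_field \<Rightarrow> 'a::{ab_group_add,t2_space} \<Rightarrow> 'a"
  assumes tv: "tvs s" and cW: "closed W" and sW: "module.subspace s W" and eW: "e \<notin> W"
  shows "closed {x. \<exists>k. x - s k e \<in> W}"
proof -
  interpret vs: vector_space s using tvs_vs[OF tv] .
  define W' where "W' = {x. \<exists>k. x - s k e \<in> W}"
  define \<kappa> where "\<kappa> x = (SOME k. x - s k e \<in> W)" for x
  have \<kappa>: "x - s (\<kappa> x) e \<in> W" if "x \<in> W'" for x
    using that unfolding W'_def \<kappa>_def by (auto intro: someI_ex)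
  have "z \<in> W'" if zl: "z islimpt W'" for z
  proof (rule ccontr)
    assume zn: "z \<notin> W'"
    define F where "F = at z within W'"
    have Fnb: "F \<noteq> bot" using zl by (simp add: F_def trivial_limit_within)
    have evW: "eventually (\<lambda>x. x \<in> W') F" unfolding F_def by (simp add: eventually_at_filter)
    have evK: "eventually (\<lambda>x. x - s (\<kappa> x) e \<in> W) F" using evW by (rule eventually_mono) (rule \<kappa>)
    have idz: "((\<lambda>x. x) \<longlongrightarrow> z) F" unfolding F_def by simp
    show False
    proof (cases "\<exists>M. frequently (\<lambda>x. norm (\<kappa> x) \<le> M) F")
      case True
      then obtain M where M: "frequently (\<lambda>x. norm (\<kappa> x) \<le> M) F" by blast
      define F' where "F' = inf F (principal {x. norm (\<kappa> x) \<le> M})"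
      have F'le: "F' \<le> F" by (simp add: F'_def)
      have F'nb: "F' \<noteq> bot"
      proof
        assume "F' = bot"
        hence "eventually (\<lambda>x. False) F'" by simp
        hence "eventually (\<lambda>x. \<not> norm (\<kappa> x) \<le> M) F"
          unfolding F'_def eventually_inf_principal by simp
        thus False using M by (simp add: frequently_def)
      qed
      have "filtermap \<kappa> F' \<noteq> bot" using F'nb by (simp add: filtermap_bot_iff)
      moreover have "eventually (\<lambda>k. k \<in> cball 0 M) (filtermap \<kappa> F')"
        unfolding eventually_filtermap F'_def eventually_inf_principal by simp
      ultimately obtain t where t: "inf (nhds t) (filtermap \<kappa> F') \<noteq> bot"
        using K_compact_cball[of M, unfolded compact_filter] by blast
      define G where "G = inf F' (filtercomap \<kappa> (nhds t))"
      have Gnb: "G \<noteq> bot"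
      proof
        assume "G = bot"
        hence "eventually (\<lambda>x. False) G" by simp
        then obtain Pf Pg where Pf: "eventually Pf F'" and Pg: "eventually Pg (filtercomap \<kappa> (nhds t))"
          and PP: "\<And>x. Pf x \<Longrightarrow> Pg x \<Longrightarrow> False"
          unfolding G_def eventually_inf by blast
        from Pg obtain Q where Q: "eventually Q (nhds t)" "\<And>x. Q (\<kappa> x) \<Longrightarrow> Pg x"
          unfolding eventually_filtercomap by blast
        have "eventually (\<lambda>y. \<not> Q y) (filtermap \<kappa> F')"
          unfolding eventually_filtermap using Pf by (rule eventually_mono) (use PP Q in blast)
        hence "eventually (\<lambda>y. False) (inf (nhds t) (filtermap \<kappa> F'))"
          unfolding eventually_inf using Q(1) by blast
        thus False using t by simp
      qed
      have GF: "G \<le> F" using F'le by (simp add: G_def le_infI1)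
      have kt: "(\<kappa> \<longlongrightarrow> t) G"
        by (rule tendsto_mono[OF _ filterlim_filtercomap]) (simp add: G_def)
      have L1: "((\<lambda>x. x - s (\<kappa> x) e) \<longlongrightarrow> z - s t e) G"
        by (intro tvs_tendsto_diff[OF tv] tvs_tendsto_scale[OF tv] tendsto_mono[OF GF idz] kt tendsto_const)
      have L2: "eventually (\<lambda>x. x - s (\<kappa> x) e \<in> W) G" using filter_leD[OF GF evK] .
      have "z - s t e \<in> W" by (rule Lim_in_closed_set[OF cW L2 Gnb L1])
      thus False using zn unfolding W'_def by blast
    next
      case False
      hence big: "eventually (\<lambda>x. \<not> norm (\<kappa> x) \<le> M) F" for M
        by (simp add: not_frequently)
      have "filterlim \<kappa> at_infinity F"
        by (subst filterlim_at_infinity[of 0]) (auto intro: eventually_mono[OF big, of r "\<lambda>x. r \<le> norm (\<kappa> x)" for r])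
      hence inv0: "((\<lambda>x. inverse (\<kappa> x)) \<longlongrightarrow> 0) F"
        by (rule filterlim_compose[OF tendsto_inverse_0])
      have "((\<lambda>x. s (inverse (\<kappa> x)) x - e) \<longlongrightarrow> s 0 z - e) F"
        by (intro tvs_tendsto_diff[OF tv] tvs_tendsto_scale[OF tv] inv0 idz tendsto_const)
      hence lim: "((\<lambda>x. s (inverse (\<kappa> x)) x - e) \<longlongrightarrow> - e) F" by simp
      have L3: "eventually (\<lambda>x. s (inverse (\<kappa> x)) x - e \<in> W) F"
        using eventually_conj[OF evK big[of 0]]
      proof (rule eventually_mono)
        fix x assume x: "x - s (\<kappa> x) e \<in> W \<and> \<not> norm (\<kappa> x) \<le> 0"
        hence "s (inverse (\<kappa> x)) (x - s (\<kappa> x) e) \<in> W" using sW vs.subspace_scale by blast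
        moreover have "s (inverse (\<kappa> x)) (x - s (\<kappa> x) e) = s (inverse (\<kappa> x)) x - e"
          using x by (simp add: vs.scale_right_diff_distrib)
        ultimately show "s (inverse (\<kappa> x)) x - e \<in> W" by simp
      qed
      have "- e \<in> W" by (rule Lim_in_closed_set[OF cW L3 Fnb lim])
      hence "e \<in> W" using vs.subspace_neg[OF sW] by fastforce
      thus False using eW by simp
    qed
  qed
  thus ?thesis unfolding W'_def[symmetric] closed_limpt by blast
qed

lemma tvs_closed_span:
  fixes s :: "'k::real_normed_field \<Rightarrow> 'a::{ab_group_add,t2_space} \<Rightarrow> 'a"
  assumes tv: "tvs s" and fB: "finite B"
  shows "closed (module.span s B)"
  using fB
proof (induction rule: finite_induct)
  interpret vs: vector_space s using tvs_vs[OF tv] .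
  case empty
  show ?case by simp
next
  interpret vs: vector_space s using tvs_vs[OF tv] .
  case (insert e B)
  show ?case
  proof (cases "e \<in> vs.span B")
    case True thus ?thesis using insert.IH by (simp add: vs.span_redundant)
  next
    case False
    show ?thesis unfolding vs.span_insert
      by (rule closed_insert_line[OF tv insert.IH vs.subspace_span False])
  qed
qed



lemma orbit_in_Sigma:
  fixes s :: "'k::real_normed_field \<Rightarrow> 'a::{ab_group_add,t2_space} \<Rightarrow> 'a"
  assumes tv: "tvs s" and A0: "A0 \<in> Sigma_set s" and T0: "T0 \<in> cont_ops s"
    and dense: "closure (orbit T0 x) = UNIV"
  shows "orbit T0 x \<in> Sigma_set s"
proof -
  interpret vs: vector_space s using tvs_vs[OF tv] .
  have lin: "Vector_Spaces.linear s s T0" using T0 by (simp add: cont_ops_def)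
  interpret lin: Vector_Spaces.linear s s T0 by (rule lin)
  define f where "f n = (T0 ^^ n) x" for n
  have O: "orbit T0 x = range f" by (simp add: orbit_def f_def)
  have A0i: "infinite A0" "\<not> vs.dependent A0" using A0 by (auto simp: Sigma_set_def)
  have cnt: "countable (orbit T0 x)" unfolding O by simp
  have inf: "infinite (orbit T0 x)"
  proof
    assume "finite (orbit T0 x)"
    hence "closed (orbit T0 x)" by (rule finite_imp_closed)
    hence "orbit T0 x = UNIV" using dense by (simp add: closure_closed)
    hence "finite (UNIV :: 'a set)" using \<open>finite (orbit T0 x)\<close> by simp
    thus False using A0i(1) finite_subset[OF subset_UNIV, of A0] by simp
  qed
  have indep: "\<not> vs.dependent (orbit T0 x)"
  proof
    assume dep: "vs.dependent (orbit T0 x)"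
    show False
    proof (cases "\<exists>m. f m \<in> vs.span (f ` {..<m})")
      case False
      have ind: "\<not> vs.dependent (f ` {..<N})" for N
      proof (induction N)
        case 0 thus ?case using vs.independent_empty by simp
      next
        case (Suc N)
        have "f ` {..<Suc N} = insert (f N) (f ` {..<N})" by (simp add: lessThan_Suc)
        moreover have "f N \<notin> vs.span (f ` {..<N})" using False by blast
        ultimately show ?case using Suc.IH vs.independent_insertI by simp
      qed
      from dep obtain t u where t: "finite t" "t \<subseteq> range f" "(\<Sum>v\<in>t. s (u v) v) = 0" "\<exists>v\<in>t. u v \<noteq> 0"
        unfolding O vs.dependent_explicit by blast
      obtain I where I: "finite I" "t = f ` I" using finite_subset_image[OF t(1,2)] by blast
      obtain N where "I \<subseteq> {..<N}" using I(1) finite_nat_bounded by blast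
      hence tN: "t \<subseteq> f ` {..<N}" using I(2) by blast
      have "vs.dependent t" unfolding vs.dependent_explicit using t by blast
      hence "vs.dependent (f ` {..<N})" using tN vs.dependent_mono by blast
      thus False using ind by blast
    next
      case True
      then obtain m where m: "f m \<in> vs.span (f ` {..<m})" by blast
      define V where "V = vs.span (f ` {..<m})"
      have TV: "T0 v \<in> V" if "v \<in> V" for v
      proof -
        have "T0 ` (f ` {..<m}) \<subseteq> V"
        proof
          fix y assume "y \<in> T0 ` (f ` {..<m})"
          then obtain n where n: "n < m" "y = f (Suc n)" by (auto simp: f_def)
          show "y \<in> V"
          proof (cases "Suc n < m")
            case True thus ?thesis using n unfolding V_def by (auto intro: vs.span_base)
          next
            case False hence "Suc n = m" using n by simp
            thus ?thesis using n m V_def by simp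
          qed
        qed
        hence "vs.span (T0 ` (f ` {..<m})) \<subseteq> V" unfolding V_def by (rule vs.span_minimal) simp
        moreover have "T0 v \<in> vs.span (T0 ` (f ` {..<m}))"
          using that unfolding V_def lin.span_image by blast
        ultimately show ?thesis by blast
      qed
      have allV: "f k \<in> V" for k
      proof (induction k)
        case 0 show ?case
        proof (cases "m = 0")
          case True thus ?thesis using m V_def by simp
        next
          case False thus ?thesis unfolding V_def by (auto intro: vs.span_base)
        qed
      next
        case (Suc k)
        have "f (Suc k) = T0 (f k)" by (simp add: f_def)
        thus ?case using TV Suc.IH by simp
      qed
      have cV: "closed V" unfolding V_def by (rule tvs_closed_span[OF tv]) simp
      have "orbit T0 x \<subseteq> V" using allV O by auto
      hence "closure (orbit T0 x) \<subseteq> V" using cV closure_minimal by blast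
      hence "A0 \<subseteq> vs.span (f ` {..<m})" using dense V_def by auto
      hence "finite A0" using vs.independent_span_bound[of "f ` {..<m}" A0] A0i(2) by auto
      thus False using A0i(1) by simp
    qed
  qed
  show ?thesis unfolding Sigma_set_def using cnt inf dense indep by simp
qed

theorem lemma1p2:
  fixes smult_op :: "'k::real_normed_field \<Rightarrow> 'a::{ab_group_add,t2_space} \<Rightarrow> 'a"
  assumes "G_space smult_op"
    and "\<exists>T0\<in>cont_ops smult_op. hypercyclic T0"
  shows "\<forall>A\<in>Sigma_set smult_op. \<exists>T\<in>cont_ops smult_op. \<exists>x. A = orbit T x"
proof
  fix A assume A: "A \<in> Sigma_set smult_op"
  have tv: "tvs smult_op" using assms(1) by (simp add: G_space_def locally_convex_def)
  obtain T0 where T0: "T0 \<in> cont_ops smult_op" "hypercyclic T0" using assms(2) by blast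
  obtain x where dense: "closure (orbit T0 x) = UNIV" using T0(2) by (auto simp: hypercyclic_def)
  have OS: "orbit T0 x \<in> Sigma_set smult_op" by (rule orbit_in_Sigma[OF tv A T0(1) dense])
  obtain J where J: "J \<in> inv_ops smult_op" "J ` orbit T0 x = A"
    using assms(1) OS A unfolding G_space_def by blast
  have Jl: "Vector_Spaces.linear smult_op smult_op J" "continuous_on UNIV J" "bij J"
    "Vector_Spaces.linear smult_op smult_op (inv J)" "continuous_on UNIV (inv J)"
    using J(1) by (auto simp: inv_ops_def cont_ops_def)
  have T0l: "Vector_Spaces.linear smult_op smult_op T0" "continuous_on UNIV T0"
    using T0(1) by (auto simp: cont_ops_def)
  have JiJ: "inv J (J y) = y" for y using Jl(3) by (simp add: bij_def inv_f_f)
  have JJi: "J (inv J y) = y" for y using Jl(3) by (simp add: bij_def surj_f_inv_f)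
  define T where "T = J \<circ> T0 \<circ> inv J"
  have Tn: "(T ^^ n) y = J ((T0 ^^ n) (inv J y))" for n y
    by (induction n arbitrary: y) (simp_all add: T_def JJi JiJ)
  have "orbit T (J x) = J ` orbit T0 x"
    unfolding orbit_def by (auto simp: Tn JiJ)
  hence orb: "A = orbit T (J x)" using J(2) by simp
  have "Vector_Spaces.linear smult_op smult_op T"
    unfolding T_def by (rule Vector_Spaces.linear_compose[OF Jl(4) Vector_Spaces.linear_compose[OF T0l(1) Jl(1)]])
  moreover have "continuous_on UNIV T"
    unfolding T_def
    by (intro continuous_on_compose continuous_on_subset[OF Jl(2)] continuous_on_subset[OF T0l(2)] Jl(5)) auto
  ultimately have "T \<in> cont_ops smult_op" by (simp add: cont_ops_def)
  thus "\<exists>T\<in>cont_ops smult_op. \<exists>x. A = orbit T x" using orb by blast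
qed


end
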